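(* The map $\mathfrak q:S^2\times S^1\to S^3$, $\mathfrak q(x,z)=u^{-1}zu$ for any $u\in S^3$ with $x=u^{-1}\mathbf iu$, has degree two.
   Context: $S^3$ is the group of unit quaternions, $S^2$ the unit purely imaginary quaternions, $S^1=\{a+b\mathbf i:a^2+b^2=1\}\subset S^3$; $\mathfrak q$ is well defined since $u$ is determined by $x$ up to left multiplication by elements of $S^1$, which commute with $z$. Orientations: $\mathbb H\cong\mathbb C^2$ via $(z,w)\mapsto z+w\mathbf j$ with complex orientation $dq^0\wedge dq^1\wedge dq^2\wedge dq^3$, spheres oriented as boundaries (outer normal first), with normalized volume forms $\omega_{S^1}=\frac1{2\pi\mathbf i}z^{-1}dz$, $\omega_{S^2}=-\frac1{8\pi}x\,dx\wedge dx$, $\omega_{S^3}=-\frac1{12\pi^2}\mathrm{Re}((q^{-1}dq)^{\wedge3})$; $S^2\times S^1$ carries the product orientation, so the degree is $\int_{S^2\times S^1}\mathfrak q^*\omega_{S^3}$ with $\omega_{S^2}\wedge\omega_{S^1}$ positive. *)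

theory Defs
  imports "HOL-Analysis.Analysis"
begin

section \<open>Quaternions as C^2 via (z,w) |-> z + w j\<close>

type_synonym quat = "complex \<times> complex"

definition qmul :: "quat \<Rightarrow> quat \<Rightarrow> quat" where
  "qmul p q = (fst p * fst q - snd p * cnj (snd q), fst p * snd q + snd p * cnj (fst q))"

definition qcnj :: "quat \<Rightarrow> quat" where
  "qcnj q = (cnj (fst q), - snd q)"

definition qinv :: "quat \<Rightarrow> quat" where
  "qinv q = (1 / (norm q)\<^sup>2) *\<^sub>R qcnj q"

definition qRe :: "quat \<Rightarrow> real" where
  "qRe q = Re (fst q)"

definition qi :: quat where "qi = (\<i>, 0)"
definition qj :: quat where "qj = (0, 1)"
definition qk :: quat where "qk = (0, \<i>)"

text \<open>Coordinates: q = q0 + q1 i + q2 j + q3 k corresponds to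
  (q0 + q1 \<i>, q2 + q3 \<i>); the orientation dq0 dq1 dq2 dq3 is the complex one.\<close>

definition S3 :: "quat set" where "S3 = {q. norm q = 1}"
definition S2 :: "quat set" where "S2 = {x \<in> S3. qRe x = 0}"
definition S1 :: "quat set" where "S1 = {z \<in> S3. snd z = 0}"

definition frakq :: "quat \<times> quat \<Rightarrow> quat" where
  "frakq p = (let x = fst p; z = snd p;
                  u = (SOME u. u \<in> S3 \<and> x = qmul (qinv u) (qmul qi u))
              in qmul (qinv u) (qmul z u))"

text \<open>omega_S3 = -1/(12 pi^2) Re((q^{-1} dq)^3), where the wedge of quaternion-valued
  1-forms is (a1 ^ a2 ^ a3)(v1,v2,v3) = sum over permutations s of sgn s * a1(v_s1) a2(v_s2) a3(v_s3)
  (product in that order).\<close>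

definition omega_S3 :: "quat \<Rightarrow> quat \<Rightarrow> quat \<Rightarrow> quat \<Rightarrow> real" where
  "omega_S3 q v1 v2 v3 =
     (let a = (\<lambda>v. qmul (qinv q) v);
          m = (\<lambda>x y z. qmul x (qmul y z))
      in - (1 / (12 * pi\<^sup>2)) *
         qRe (m (a v1) (a v2) (a v3) - m (a v1) (a v3) (a v2) - m (a v2) (a v1) (a v3)
            + m (a v2) (a v3) (a v1) + m (a v3) (a v1) (a v2) - m (a v3) (a v2) (a v1)))"

text \<open>omega_S2 = -1/(8 pi) x dx ^ dx, with (dx ^ dx)(a,b) = ab - ba; the value is real on
  tangent vectors, we take its real part.\<close>

definition omega_S2 :: "quat \<Rightarrow> quat \<Rightarrow> quat \<Rightarrow> real" where
  "omega_S2 x a b = - (1 / (8 * pi)) * qRe (qmul x (qmul a b - qmul b a))"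

text \<open>omega_S1 = 1/(2 pi i) z^{-1} dz (S1 sits in the first complex coordinate).\<close>

definition omega_S1 :: "quat \<Rightarrow> quat \<Rightarrow> real" where
  "omega_S1 z c = Re ((1 / (2 * pi * \<i>)) * (inverse (fst z) * fst c))"

definition omega_S2S1 :: "quat \<times> quat \<Rightarrow> quat \<times> quat \<Rightarrow> quat \<times> quat \<Rightarrow> quat \<times> quat \<Rightarrow> real" where
  "omega_S2S1 p v1 v2 v3 =
     omega_S2 (fst p) (fst v1) (fst v2) * omega_S1 (snd p) (snd v3)
   - omega_S2 (fst p) (fst v1) (fst v3) * omega_S1 (snd p) (snd v2)
   + omega_S2 (fst p) (fst v2) (fst v3) * omega_S1 (snd p) (snd v1)"

text \<open>Parametrization of S2 x S1 (a diffeomorphism off a null set):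
  (th, ph, t) |-> (sin th cos ph i + sin th sin ph j + cos th k, e^{it}).\<close>

definition param :: "real \<times> real \<times> real \<Rightarrow> quat \<times> quat" where
  "param s = (case s of (th, ph, t) \<Rightarrow>
     ((Complex 0 (sin th * cos ph), Complex (sin th * sin ph) (cos th)), (cis t, 0)))"

definition pd1 :: "(real \<times> real \<times> real \<Rightarrow> 'a::real_normed_vector) \<Rightarrow> real \<times> real \<times> real \<Rightarrow> 'a" where
  "pd1 F s = (case s of (a, b, c) \<Rightarrow> vector_derivative (\<lambda>r. F (r, b, c)) (at a))"
definition pd2 :: "(real \<times> real \<times> real \<Rightarrow> 'a::real_normed_vector) \<Rightarrow> real \<times> real \<times> real \<Rightarrow> 'a" where
  "pd2 F s = (case s of (a, b, c) \<Rightarrow> vector_derivative (\<lambda>r. F (a, r, c)) (at b))"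
definition pd3 :: "(real \<times> real \<times> real \<Rightarrow> 'a::real_normed_vector) \<Rightarrow> real \<times> real \<times> real \<Rightarrow> 'a" where
  "pd3 F s = (case s of (a, b, c) \<Rightarrow> vector_derivative (\<lambda>r. F (a, b, r)) (at c))"

text \<open>Degree of f : S2 x S1 -> S3 = integral over S2 x S1 of f^* omega_S3, where S2 x S1 is
  oriented by omega_S2 ^ omega_S1.  Computed in the chart param; the factor
  sgn((omega_S2 ^ omega_S1)(d param)) makes the chart orientation match the given one.\<close>

definition degree_S2S1 :: "(quat \<times> quat \<Rightarrow> quat) \<Rightarrow> real" where
  "degree_S2S1 f =
     integral (cbox (0, 0, 0) (pi, 2 * pi, 2 * pi))
       (\<lambda>s. sgn (omega_S2S1 (param s) (pd1 param s) (pd2 param s) (pd3 param s)) *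
            omega_S3 ((f \<circ> param) s) (pd1 (f \<circ> param) s) (pd2 (f \<circ> param) s) (pd3 (f \<circ> param) s))"

end

theory Submission
  imports Defs
begin


lemma norm_quat_sq: "(norm (u::quat))\<^sup>2 = (Re (fst u))\<^sup>2 + (Im (fst u))\<^sup>2 + (Re (snd u))\<^sup>2 + (Im (snd u))\<^sup>2"
  by (cases u) (simp add: norm_Pair cmod_power2)

lemma qmul_lin: "qmul (qcnj u) (qmul (Complex a b, 0) u) = a *\<^sub>R qmul (qcnj u) u + b *\<^sub>R qmul (qcnj u) (qmul qi u)"
  by (cases u) (simp add: qmul_def qcnj_def qi_def complex_eq_iff algebra_simps scaleR_conv_of_real)

lemma qcnj_self: "qmul (qcnj u) u = (complex_of_real ((norm u)\<^sup>2), 0)"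
  unfolding norm_quat_sq
  by (cases u) (simp add: qmul_def qcnj_def complex_eq_iff algebra_simps power2_eq_square)

lemma qinv_S3: "u \<in> S3 \<Longrightarrow> qinv u = qcnj u"
  by (simp add: S3_def qinv_def)

lemma conj_formula: "u \<in> S3 \<Longrightarrow> qmul (qinv u) (qmul (Complex a b, 0) u) = (complex_of_real a, 0) + b *\<^sub>R qmul (qinv u) (qmul qi u)"
  by (simp add: qinv_S3 qmul_lin qcnj_self S3_def scaleR_conv_of_real)



lemma e1: fixes p q r s :: real assumes pqr: "p\<^sup>2 + q\<^sup>2 + r\<^sup>2 = 1" and s2: "s\<^sup>2 = 2 + 2*p" and pp: "p > -1"
  shows "((1+p)/s)*((1+p)/s) - (q/s)*(q/s) - (r/s)*(r/s) = p"
proof -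
  have "((1+p)/s)*((1+p)/s) - (q/s)*(q/s) - (r/s)*(r/s) = ((1+p)^2 - q^2 - r^2)/s^2"
    by (simp add: power2_eq_square diff_divide_distrib)
  also have "(1+p)^2 - q^2 - r^2 = (1+p)^2 - (1 - p^2)" using pqr by simp
  also have "\<dots> = p * (2 + 2*p)" by (simp add: power2_eq_square algebra_simps)
  finally show ?thesis using s2 pp by simp
qed

lemma e2: fixes p q s :: real assumes s2: "s\<^sup>2 = 2 + 2*p" and pp: "p > -1"
  shows "2 * ((1+p)/s) * (q/s) = q"
proof -
  have "2 * ((1+p)/s) * (q/s) = q * (2 + 2*p) / s^2" by (simp add: power2_eq_square)
  then show ?thesis using s2 pp by simp
qed

lemma comp: "qmul (qcnj (Complex 0 a, Complex b c)) (qmul qi (Complex 0 a, Complex b c)) = (Complex 0 (a*a - b*b - c*c), Complex (2*a*b) (2*a*c))"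
  by (simp add: qmul_def qcnj_def qi_def complex_eq_iff algebra_simps)

lemma exists_u:
  assumes "x \<in> S2" shows "\<exists>u. u \<in> S3 \<and> x = qmul (qinv u) (qmul qi u)"
proof -
  obtain p q r where x: "x = (Complex 0 p, Complex q r)" and pqr: "p\<^sup>2 + q\<^sup>2 + r\<^sup>2 = 1"
  proof -
    obtain z w where xz: "x = (z, w)" by (cases x)
    have "Re z = 0" using assms xz by (simp add: S2_def qRe_def)
    moreover have "(norm x)\<^sup>2 = 1" using assms by (simp add: S2_def S3_def)
    ultimately show ?thesis using that[of "Im z" "Re w" "Im w"] xz norm_quat_sq[of x]
      by (cases z) auto
  qed
  have qq: "q\<^sup>2 \<ge> 0" "r\<^sup>2 \<ge> 0" by simp_all
  show ?thesis
  proof (cases "p = -1")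
    case True
    then have "q\<^sup>2 + r\<^sup>2 = 0" using pqr by simp
    then have "q = 0" "r = 0" using qq by simp_all
    show ?thesis
      apply (rule exI[of _ "(0,1)"])
      using True \<open>q = 0\<close> \<open>r = 0\<close> x
      by (simp add: S3_def qinv_def qcnj_def qmul_def qi_def complex_eq_iff)
  next
    case False
    have "p\<^sup>2 \<le> 1" using pqr qq by linarith
    then have "p \<ge> -1" using abs_le_square_iff[of p 1] by simp
    with False have pp: "p > -1" by simp
    define s where "s = sqrt (2 + 2*p)"
    have s2: "s\<^sup>2 = 2 + 2*p" using pp by (simp add: s_def)
    have spos: "s > 0" using pp by (simp add: s_def)
    define u where "u = (Complex 0 ((1+p)/s), Complex (q/s) (r/s))"
    have "(norm u)\<^sup>2 = (((1+p)/s)*((1+p)/s) - (q/s)*(q/s) - (r/s)*(r/s)) + 2*((q/s)*(q/s) + (r/s)*(r/s))"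
      unfolding norm_quat_sq u_def by (simp add: power2_eq_square)
    also have "\<dots> = p + 2*((q/s)*(q/s) + (r/s)*(r/s))" using e1[OF pqr s2 pp] by simp
    also have "(q/s)*(q/s) + (r/s)*(r/s) = (q\<^sup>2 + r\<^sup>2) / s\<^sup>2" by (simp add: power2_eq_square add_divide_distrib)
    also have "\<dots> = (1 - p) / 2"
    proof -
      have h: "q\<^sup>2 + r\<^sup>2 = ((1 - p) / 2) * s\<^sup>2"
        unfolding s2 using pqr by (simp add: field_simps power2_eq_square)
      show ?thesis unfolding h using spos by simp
    qed
    also have "p + 2 * ((1 - p) / 2) = 1" by (simp add: field_simps)
    finally have nu: "(norm u)\<^sup>2 = 1" .
    have uS3: "u \<in> S3" using nu unfolding S3_def
      by (smt (verit) mem_Collect_eq norm_ge_zero power2_eq_1_iff)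
    have "qmul (qcnj u) (qmul qi u) = (Complex 0 (((1+p)/s)*((1+p)/s) - (q/s)*(q/s) - (r/s)*(r/s)),
       Complex (2 * ((1+p)/s) * (q/s)) (2 * ((1+p)/s) * (r/s)))"
      unfolding u_def by (rule comp)
    also have "\<dots> = x" unfolding e1[OF pqr s2 pp] e2[OF s2 pp, of q] e2[OF s2 pp, of r] x ..
    finally have "x = qmul (qinv u) (qmul qi u)" unfolding qinv_S3[OF uS3] by simp
    with uS3 show ?thesis by blast
  qed
qed

lemma frakq_formula:
  assumes "x \<in> S2" shows "frakq (x, (Complex a b, 0)) = (complex_of_real a, 0) + b *\<^sub>R x"
proof -
  let ?P = "\<lambda>u. u \<in> S3 \<and> x = qmul (qinv u) (qmul qi u)"
  obtain u where u: "u = (SOME u. ?P u)" by simp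
  have "?P u" using someI_ex[OF exists_u[OF assms]] u by simp
  then have "qmul (qinv u) (qmul (Complex a b, 0) u) = (complex_of_real a, 0) + b *\<^sub>R x"
    using conj_formula[of u a b] by simp
  moreover have "frakq (x, (Complex a b, 0)) = qmul (qinv u) (qmul (Complex a b, 0) u)"
    unfolding frakq_def Let_def u by simp
  ultimately show ?thesis by simp
qed



lemma vd_Complex:
  "(f has_real_derivative f') (at x) \<Longrightarrow> (g has_real_derivative g') (at x) \<Longrightarrow>
   ((\<lambda>r. Complex (f r) (g r)) has_vector_derivative Complex f' g') (at x)"
  by (simp add: has_vector_derivative_complex_iff)

lemma param_eq: "param (th, ph, t) = ((Complex 0 (sin th * cos ph), Complex (sin th * sin ph) (cos th)), (Complex (cos t) (sin t), Complex 0 0))"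
  by (simp add: param_def complex_eq_iff)

lemma x_S2: "(Complex 0 (sin th * cos ph), Complex (sin th * sin ph) (cos th)) \<in> S2"
proof -
  have h: "(sin th)\<^sup>2 * (cos ph)\<^sup>2 + (sin th)\<^sup>2 * (sin ph)\<^sup>2 = (sin th)\<^sup>2"
    by (metis distrib_left mult.right_neutral sin_cos_squared_add add.commute)
  have "(sin th * cos ph)\<^sup>2 + (sin th * sin ph)\<^sup>2 + (cos th)\<^sup>2 = 1"
    unfolding power_mult_distrib h by simp
  then have "(norm (Complex 0 (sin th * cos ph), Complex (sin th * sin ph) (cos th)))\<^sup>2 = 1"
    unfolding norm_quat_sq by simp
  then have "norm (Complex 0 (sin th * cos ph), Complex (sin th * sin ph) (cos th)) = 1"
    by (smt (verit) norm_ge_zero power2_eq_1_iff)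
  then show ?thesis by (simp add: S2_def S3_def qRe_def)
qed

lemma F_eq: "(frakq \<circ> param) (th, ph, t) = (Complex (cos t) (sin t * (sin th * cos ph)), Complex (sin t * (sin th * sin ph)) (sin t * cos th))"
  unfolding comp_def param_eq zero_complex.ctr[symmetric]
  using frakq_formula[OF x_S2[of th ph], of "cos t" "sin t"]
  by (simp add: complex_eq_iff)

lemma pd1_param: "pd1 param (th, ph, t) = ((Complex 0 (cos th * cos ph), Complex (cos th * sin ph) (- sin th)), (Complex 0 0, Complex 0 0))"
  unfolding pd1_def param_eq split
  by (rule vector_derivative_at) (intro has_vector_derivative_Pair vd_Complex; auto intro!: derivative_eq_intros)

lemma pd2_param: "pd2 param (th, ph, t) = ((Complex 0 (- (sin th * sin ph)), Complex (sin th * cos ph) 0), (Complex 0 0, Complex 0 0))"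
  unfolding pd2_def param_eq split
  by (rule vector_derivative_at) (intro has_vector_derivative_Pair vd_Complex; auto intro!: derivative_eq_intros)

lemma pd3_param: "pd3 param (th, ph, t) = ((Complex 0 0, Complex 0 0), (Complex (- sin t) (cos t), Complex 0 0))"
  unfolding pd3_def param_eq split
  by (rule vector_derivative_at) (intro has_vector_derivative_Pair vd_Complex; auto intro!: derivative_eq_intros)

lemma pd1_F: "pd1 (frakq \<circ> param) (th, ph, t) = (Complex 0 (sin t * (cos th * cos ph)), Complex (sin t * (cos th * sin ph)) (sin t * (- sin th)))"
  unfolding pd1_def F_eq split
  by (rule vector_derivative_at) (intro has_vector_derivative_Pair vd_Complex; auto intro!: derivative_eq_intros)

lemma pd2_F: "pd2 (frakq \<circ> param) (th, ph, t) = (Complex 0 (sin t * (- (sin th * sin ph))), Complex (sin t * (sin th * cos ph)) 0)"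
  unfolding pd2_def F_eq split
  by (rule vector_derivative_at) (intro has_vector_derivative_Pair vd_Complex; auto intro!: derivative_eq_intros)

lemma pd3_F: "pd3 (frakq \<circ> param) (th, ph, t) = (Complex (- sin t) (cos t * (sin th * cos ph)), Complex (cos t * (sin th * sin ph)) (cos t * cos th))"
  unfolding pd3_def F_eq split
  by (rule vector_derivative_at) (intro has_vector_derivative_Pair vd_Complex; auto intro!: derivative_eq_intros)



lemma A3: fixes a b c d e f :: real
  assumes ab: "a\<^sup>2 + b\<^sup>2 = 1" and cd: "c\<^sup>2 + d\<^sup>2 = 1" and ef: "e\<^sup>2 + f\<^sup>2 = 1"
  shows "qmul (qcnj (Complex f (e*(a*d)), Complex (e*(a*c)) (e*b))) (Complex (-e) (f*(a*d)), Complex (f*(a*c)) (f*b))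
       = (Complex 0 (a*d), Complex (a*c) b)"
  using assms by (simp add: qmul_def qcnj_def complex_eq_iff) algebra

lemma A1: fixes a b c d e f :: real
  assumes ab: "a\<^sup>2 + b\<^sup>2 = 1" and cd: "c\<^sup>2 + d\<^sup>2 = 1" and ef: "e\<^sup>2 + f\<^sup>2 = 1"
  shows "qmul (qcnj (Complex f (e*(a*d)), Complex (e*(a*c)) (e*b))) (Complex 0 (e*(b*d)), Complex (e*(b*c)) (e*(-a)))
       = (Complex 0 (e*f*b*d + e\<^sup>2*c), Complex (e*f*b*c - e\<^sup>2*d) (-e*f*a))"
  using assms by (simp add: qmul_def qcnj_def complex_eq_iff) algebra

lemma A2: fixes a b c d e f :: real
  assumes ab: "a\<^sup>2 + b\<^sup>2 = 1" and cd: "c\<^sup>2 + d\<^sup>2 = 1" and ef: "e\<^sup>2 + f\<^sup>2 = 1"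
  shows "qmul (qcnj (Complex f (e*(a*d)), Complex (e*(a*c)) (e*b))) (Complex 0 (e*(-(a*c))), Complex (e*(a*d)) 0)
       = (Complex 0 (-e*f*a*c + e\<^sup>2*a*b*d), Complex (e*f*a*d + e\<^sup>2*a*b*c) (-e\<^sup>2*a\<^sup>2))"
  using assms by (simp add: qmul_def qcnj_def complex_eq_iff) algebra

lemma L1: "qRe (qmul (Complex 0 a1, Complex a2 a3) (qmul (Complex 0 b1, Complex b2 b3) (Complex 0 c1, Complex c2 c3))
   - qmul (Complex 0 a1, Complex a2 a3) (qmul (Complex 0 c1, Complex c2 c3) (Complex 0 b1, Complex b2 b3))
   - qmul (Complex 0 b1, Complex b2 b3) (qmul (Complex 0 a1, Complex a2 a3) (Complex 0 c1, Complex c2 c3))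
   + qmul (Complex 0 b1, Complex b2 b3) (qmul (Complex 0 c1, Complex c2 c3) (Complex 0 a1, Complex a2 a3))
   + qmul (Complex 0 c1, Complex c2 c3) (qmul (Complex 0 a1, Complex a2 a3) (Complex 0 b1, Complex b2 b3))
   - qmul (Complex 0 c1, Complex c2 c3) (qmul (Complex 0 b1, Complex b2 b3) (Complex 0 a1, Complex a2 a3)))
  = -6 * (a1*(b2*c3 - b3*c2) - a2*(b1*c3 - b3*c1) + a3*(b1*c2 - b2*c1))"
  by (simp add: qmul_def qRe_def algebra_simps)

lemma D: fixes a b c d e f :: real
  assumes ab: "a\<^sup>2 + b\<^sup>2 = 1" and cd: "c\<^sup>2 + d\<^sup>2 = 1" and ef: "e\<^sup>2 + f\<^sup>2 = 1"
  shows "(e*f*b*d + e\<^sup>2*c)*((e*f*a*d + e\<^sup>2*a*b*c)*b - (-e\<^sup>2*a\<^sup>2)*(a*c))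
    - (e*f*b*c - e\<^sup>2*d)*((-e*f*a*c + e\<^sup>2*a*b*d)*b - (-e\<^sup>2*a\<^sup>2)*(a*d))
    + (-e*f*a)*((-e*f*a*c + e\<^sup>2*a*b*d)*(a*c) - (e*f*a*d + e\<^sup>2*a*b*c)*(a*d)) = e\<^sup>2 * a"
  using assms by algebra

lemma F_S3: fixes a b c d e f :: real
  assumes ab: "a\<^sup>2 + b\<^sup>2 = 1" and cd: "c\<^sup>2 + d\<^sup>2 = 1" and ef: "e\<^sup>2 + f\<^sup>2 = 1"
  shows "(Complex f (e*(a*d)), Complex (e*(a*c)) (e*b)) \<in> S3"
proof -
  have "(norm (Complex f (e*(a*d)), Complex (e*(a*c)) (e*b)))\<^sup>2 = 1"
    unfolding norm_quat_sq using assms by simp algebra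
  then show ?thesis unfolding S3_def
    by (smt (verit) mem_Collect_eq norm_ge_zero power2_eq_1_iff)
qed

lemma w3: fixes a b c d e f :: real
  assumes ab: "a\<^sup>2 + b\<^sup>2 = 1" and cd: "c\<^sup>2 + d\<^sup>2 = 1" and ef: "e\<^sup>2 + f\<^sup>2 = 1"
  shows "omega_S3 (Complex f (e*(a*d)), Complex (e*(a*c)) (e*b))
     (Complex 0 (e*(b*d)), Complex (e*(b*c)) (e*(-a)))
     (Complex 0 (e*(-(a*c))), Complex (e*(a*d)) 0)
     (Complex (-e) (f*(a*d)), Complex (f*(a*c)) (f*b)) = e\<^sup>2 * a / (2 * pi\<^sup>2)"
  unfolding omega_S3_def Let_def qinv_S3[OF F_S3[OF assms]] A1[OF assms] A2[OF assms] A3[OF assms] L1 D[OF assms]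
  by simp

lemma w2: fixes a b c d :: real
  assumes ab: "a\<^sup>2 + b\<^sup>2 = 1" and cd: "c\<^sup>2 + d\<^sup>2 = 1"
  shows "omega_S2 (Complex 0 (a*d), Complex (a*c) b) (Complex 0 (b*d), Complex (b*c) (-a)) (Complex 0 (-(a*c)), Complex (a*d) 0)
     = a / (4 * pi)"
proof -
  have "qRe (qmul (Complex 0 (a*d), Complex (a*c) b) (qmul (Complex 0 (b*d), Complex (b*c) (-a)) (Complex 0 (-(a*c)), Complex (a*d) 0)
     - qmul (Complex 0 (-(a*c)), Complex (a*d) 0) (Complex 0 (b*d), Complex (b*c) (-a)))) = -2 * a"
    using assms by (simp add: qmul_def qRe_def) algebra
  then show ?thesis unfolding omega_S2_def by simp
qed

lemma w1: fixes e f :: real assumes ef: "e\<^sup>2 + f\<^sup>2 = 1"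
  shows "omega_S1 (Complex f e, Complex 0 0) (Complex (-e) f, Complex 0 0) = 1 / (2 * pi)"
proof -
  have nz: "Complex f e \<noteq> 0" using ef by (auto simp: complex_eq_iff)
  have "Complex (-e) f = \<i> * Complex f e" by (simp add: complex_eq_iff)
  then have "inverse (Complex f e) * Complex (-e) f = \<i>" using nz by (simp add: field_simps)
  then show ?thesis unfolding omega_S1_def by simp
qed



lemma integrand_eq:
  assumes "0 \<le> th" "th \<le> pi"
  shows "sgn (omega_S2S1 (param (th,ph,t)) (pd1 param (th,ph,t)) (pd2 param (th,ph,t)) (pd3 param (th,ph,t))) *
         omega_S3 ((frakq \<circ> param) (th,ph,t)) (pd1 (frakq \<circ> param) (th,ph,t)) (pd2 (frakq \<circ> param) (th,ph,t)) (pd3 (frakq \<circ> param) (th,ph,t))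
       = sin th * (sin t)\<^sup>2 / (2 * pi\<^sup>2)"
proof -
  have ab: "(sin th)\<^sup>2 + (cos th)\<^sup>2 = 1" and cd: "(sin ph)\<^sup>2 + (cos ph)\<^sup>2 = 1" and ef: "(sin t)\<^sup>2 + (cos t)\<^sup>2 = 1"
    by simp_all
  have s0: "sin th \<ge> 0" using assms by (simp add: sin_ge_zero)
  have z1: "omega_S1 (Complex (cos t) (sin t), Complex 0 0) (Complex 0 0, Complex 0 0) = 0"
    by (simp add: omega_S1_def zero_complex.ctr[symmetric])
  have o: "omega_S2S1 (param (th,ph,t)) (pd1 param (th,ph,t)) (pd2 param (th,ph,t)) (pd3 param (th,ph,t))
     = sin th / (4 * pi) * (1 / (2 * pi))"
    unfolding omega_S2S1_def param_eq pd1_param pd2_param pd3_param fst_conv snd_conv z1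
      w2[OF ab cd] w1[OF ef] by simp
  have "sgn (sin th / (4 * pi) * (1 / (2 * pi))) * ((sin t)\<^sup>2 * sin th / (2 * pi\<^sup>2)) = sin th * (sin t)\<^sup>2 / (2 * pi\<^sup>2)"
  proof (cases "sin th = 0")
    case True then show ?thesis by simp
  next
    case False
    then have "sin th > 0" using s0 by simp
    then have "sgn (sin th / (4 * pi) * (1 / (2 * pi))) = 1" by (simp add: sgn_mult)
    then show ?thesis by simp
  qed
  then show ?thesis
    unfolding o F_eq pd1_F pd2_F pd3_F w3[OF ab cd ef] .
qed



lemma int_sin: "integral {0..pi} sin = 2"
proof -
  have "(sin has_integral ((- cos pi) - (- cos 0))) {0..pi}"
  proof (rule fundamental_theorem_of_calculus)
    fix x :: real
    have "((\<lambda>x. - cos x) has_real_derivative sin x) (at x within {0..pi})"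
      by (auto intro!: derivative_eq_intros)
    then show "((\<lambda>x. - cos x) has_vector_derivative sin x) (at x within {0..pi})"
      by (simp add: has_real_derivative_iff_has_vector_derivative)
  qed simp
  then show ?thesis by (simp add: integral_unique)
qed

lemma int_sin2: "integral {0..2*pi} (\<lambda>t. (sin t)\<^sup>2) = pi"
proof -
  let ?f = "\<lambda>t::real. t/2 - sin (2*t)/4"
  have "((\<lambda>t. (sin t)\<^sup>2) has_integral (?f (2*pi) - ?f 0)) {0..2*pi}"
  proof (rule fundamental_theorem_of_calculus)
    fix x :: real
    have "(?f has_real_derivative (1/2 - cos (2*x) * 2 / 4)) (at x within {0..2*pi})"
      by (auto intro!: derivative_eq_intros)
    moreover have "1/2 - cos (2*x) * 2 / 4 = (sin x)\<^sup>2" using cos_double_sin[of x] by linarith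
    ultimately show "(?f has_vector_derivative (sin x)\<^sup>2) (at x within {0..2*pi})"
      by (simp add: has_real_derivative_iff_has_vector_derivative)
  qed simp
  moreover have "sin (2 * (2*pi)) = 0" using sin_npi[of 4] by (simp add: mult.assoc)
  then have "?f (2*pi) - ?f 0 = pi" by simp
  ultimately show ?thesis by (simp add: integral_unique)
qed
lemma main_integral:
  "integral (cbox (0, 0, 0) (pi, 2 * pi, 2 * pi)) (\<lambda>s. sin (fst s) * (sin (snd (snd s)))\<^sup>2 / (2 * pi\<^sup>2)) = 2"
proof -
  let ?g = "\<lambda>s::real\<times>real\<times>real. sin (fst s) * (sin (snd (snd s)))\<^sup>2 / (2 * pi\<^sup>2)"
  have c: "continuous_on A ?g" for A by (auto intro!: continuous_intros continuous_on_fst continuous_on_snd continuous_on_id)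
  have "integral (cbox (0, 0, 0) (pi, 2 * pi, 2 * pi)) ?g =
    integral (cbox 0 pi) (\<lambda>x. integral (cbox (0,0) (2*pi, 2*pi)) (\<lambda>y. ?g (x,y)))"
    by (rule integral_prod_continuous[OF c])
  also have "\<dots> = integral (cbox 0 pi) (\<lambda>x. integral (cbox 0 (2*pi)) (\<lambda>p. integral (cbox 0 (2*pi)) (\<lambda>t. ?g (x,p,t))))"
  proof (rule integral_cong)
    fix x
    have c2: "continuous_on A (\<lambda>y. ?g (x,y))" for A by (auto intro!: continuous_intros continuous_on_fst continuous_on_snd continuous_on_id)
    show "integral (cbox (0,0) (2*pi, 2*pi)) (\<lambda>y. ?g (x,y)) = integral (cbox 0 (2*pi)) (\<lambda>p. integral (cbox 0 (2*pi)) (\<lambda>t. ?g (x,p,t)))"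
      by (rule integral_prod_continuous[OF c2])
  qed
  also have "\<dots> = integral (cbox 0 pi) sin"
  proof (rule integral_cong)
    fix x
    have h2: "((\<lambda>t. (sin t)\<^sup>2) has_integral pi) {0..2*pi}"
      using int_sin2 integrable_continuous_real[of 0 "2*pi" "\<lambda>t. (sin t)\<^sup>2"]
      by (metis continuous_on_power continuous_on_sin_real has_integral_integral)
    have e: "(\<lambda>t. ?g (x,p,t)) = (\<lambda>t. (sin t)\<^sup>2 * (sin x / (2 * pi\<^sup>2)))" for p
      by (simp add: fun_eq_iff)
    have i: "integral {0..2*pi} (\<lambda>t. ?g (x,p,t)) = pi * (sin x / (2 * pi\<^sup>2))" for p
      unfolding e using has_integral_mult_left[OF h2] by (rule integral_unique)
    have "integral {0..2*pi} (\<lambda>p. integral {0..2*pi} (\<lambda>t. ?g (x,p,t))) = integral {0..2*pi} (\<lambda>p. pi * (sin x / (2 * pi\<^sup>2)))"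
      unfolding i ..
    also have "\<dots> = sin x" by (simp add: field_simps power2_eq_square)
    finally show "integral (cbox 0 (2*pi)) (\<lambda>p. integral (cbox 0 (2*pi)) (\<lambda>t. ?g (x,p,t))) = sin x"
      by (simp add: cbox_interval)
  qed
  also have "\<dots> = 2" using int_sin by (simp add: cbox_interval)
  finally show ?thesis by (simp add: cbox_interval)
qed


theorem lemma10:
  shows "degree_S2S1 frakq = 2"
proof -
  have "degree_S2S1 frakq = integral (cbox (0, 0, 0) (pi, 2 * pi, 2 * pi)) (\<lambda>s. sin (fst s) * (sin (snd (snd s)))\<^sup>2 / (2 * pi\<^sup>2))"
    unfolding degree_S2S1_def
  proof (rule integral_cong)
    fix s :: "real \<times> real \<times> real"
    assume s: "s \<in> cbox (0, 0, 0) (pi, 2 * pi, 2 * pi)"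
    obtain th ph t where st: "s = (th, ph, t)" by (cases s) auto
    have "0 \<le> th" "th \<le> pi" using s st by (auto simp: cbox_interval)
    then show "sgn (omega_S2S1 (param s) (pd1 param s) (pd2 param s) (pd3 param s)) *
            omega_S3 ((frakq \<circ> param) s) (pd1 (frakq \<circ> param) s) (pd2 (frakq \<circ> param) s) (pd3 (frakq \<circ> param) s)
       = sin (fst s) * (sin (snd (snd s)))\<^sup>2 / (2 * pi\<^sup>2)"
      unfolding st using integrand_eq by simp
  qed
  then show ?thesis using main_integral by simp
qed

end
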